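(* Let $k$ be an odd integer, $n\ge k\ge1$ and $1\le i^\circ\le n$. Then there exists an invertible linear map $S_{i^\circ}:M_{n\times k}(\mathbb F)\to M_{n\times k}(\mathbb F)$ such that: (S1) if $X\in M_{n\times k}(\mathbb F)$ and $\mathbf z\in\mathbb F^n$ satisfy $\mathbf z^tX=0$, then $(\mathbf z^\circ)^tS_{i^\circ}(X)=0$, where $\mathbf z^\circ=(\mathbf z_{i^\circ},\dots,\mathbf z_n,(-1)^{n+k+1}\mathbf z_1,\dots,(-1)^{n+k+1}\mathbf z_{i^\circ-1})^t$; (S2) $\det_{n,k}(X)=0$ implies $\det_{n,k}(S_{i^\circ}(X))=0$; (S3) for all $X\in M_{n\times k}(\mathbb F)$, if $\sum_{i=1}^n(-1)^i\big(S_{i^\circ}(X)\big)[i|)=0$ then $\sum_{i=1}^n(-1)^iX[i|)=0$.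
   Context: $X[i|)$ denotes the $i$-th row of $X$. Cullis' determinant: for $n\ge k$, $\det_{n,k}(X)=\sum_{c}\operatorname{sgn}(c)\det(X[c|))$, sum over $k$-subsets $c=\{c(1)<\dots<c(k)\}$ of $[n]$, $X[c|)$ the submatrix of rows in $c$, $\operatorname{sgn}(c)=(-1)^{\sum_{\alpha=1}^k(c(\alpha)-\alpha)}$. *)

theory Defs
  imports "Jordan_Normal_Form.Determinant" "Jordan_Normal_Form.DL_Submatrix"
begin

(* Matrices are JNF matrices, 0-indexed: row i (0-based) is row i+1 of the paper.
   A k-subset c of rows {0..<n}, with elements pick c 0 < ... < pick c (k-1).
   sgn(c) = (-1)^(sum_alpha (c(alpha) - alpha)); this quantity is invariant
   under the 0/1-index shift. *)
definition cullis_sgn :: "nat set \<Rightarrow> nat \<Rightarrow> 'a::comm_ring_1" where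
  "cullis_sgn c k = (-1) ^ (\<Sum>\<alpha><k. pick c \<alpha> - \<alpha>)"

definition cullis_det :: "nat \<Rightarrow> nat \<Rightarrow> 'a::comm_ring_1 mat \<Rightarrow> 'a" where
  "cullis_det n k X =
     (\<Sum>c\<in>{c. c \<subseteq> {..<n} \<and> card c = k}. cullis_sgn c k * det (submatrix X c {..<k}))"

definition zcirc :: "nat \<Rightarrow> nat \<Rightarrow> nat \<Rightarrow> 'a::comm_ring_1 vec \<Rightarrow> 'a vec" where
  "zcirc n k i0 z = vec n (\<lambda>j. if j + i0 - 1 < n then z $ (j + i0 - 1)
                              else (-1) ^ (n + k + 1) * z $ (j + i0 - 1 - n))"

end

theory Submission
  imports Defs
begin

definition cyc :: "nat \<Rightarrow> nat \<Rightarrow> nat" where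
  "cyc k a = (if a < k then Suc a mod k else a)"

lemma cyc_step: "1 \<le> k \<Longrightarrow> cyc (Suc k) = Transposition.transpose 0 k \<circ> cyc k"
proof (rule ext)
  fix a assume k: "1 \<le> k"
  consider "a < k - 1" | "a = k - 1" | "a = k" | "a > k" by linarith
  then show "cyc (Suc k) a = (Transposition.transpose 0 k \<circ> cyc k) a"
  proof cases
    case 1 then show ?thesis using k by (auto simp: cyc_def transpose_def)
  next
    case 2 then show ?thesis using k by (simp add: cyc_def transpose_def)
  next
    case 3 then show ?thesis using k by (simp add: cyc_def transpose_def)
  next
    case 4 then show ?thesis using k by (simp add: cyc_def transpose_def)
  qed
qed

lemma cyc_props: "1 \<le> k \<Longrightarrow> cyc k permutes {0..<k} \<and> sign (cyc k) = (-1::int)^(k-1)"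
proof (induction k rule: nat_induct_at_least)
  case base
  have c1: "cyc 1 = id" by (rule ext) (simp add: cyc_def)
  show ?case unfolding c1 by (simp add: permutes_id id_def)
next
  case (Suc k)
  have t: "Transposition.transpose 0 k permutes {0..<Suc k}"
    by (rule permutes_swap_id) auto
  have p: "cyc k permutes {0..<Suc k}"
    using Suc.IH permutes_subset by fastforce
  have "cyc (Suc k) permutes {0..<Suc k}"
    unfolding cyc_step[OF Suc.hyps] by (rule permutes_compose[OF p t])
  moreover have "sign (Transposition.transpose 0 k \<circ> cyc k) = sign (Transposition.transpose 0 k) * sign (cyc k)"
    by (rule sign_compose) (auto intro: permutes_imp_permutation[OF _ p] permutes_imp_permutation[OF _ t])
  then have "sign (cyc (Suc k)) = (-1)^(Suc k - 1)"
    unfolding cyc_step[OF Suc.hyps]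
    using Suc.hyps Suc.IH by (cases k) (auto simp: sign_swap_id)
  ultimately show ?case by simp
qed

lemma pick_eqI: "x \<in> S \<Longrightarrow> card {a\<in>S. a < x} = i \<Longrightarrow> pick S i = x"
  using pick_card_in_set by blast

lemma pick_ge: assumes "i < card S" shows "i \<le> pick S i"
proof -
  have "{a\<in>S. a < pick S i} \<subseteq> {..<pick S i}" by auto
  then have "card {a\<in>S. a < pick S i} \<le> pick S i"
    by (metis card_lessThan card_mono finite_lessThan)
  then show ?thesis using card_pick assms by simp
qed

lemma pick_bij: assumes "finite S" "card S = k" shows "bij_betw (pick S) {..<k} S"
proof -
  have inj: "inj_on (pick S) {..<k}"
    unfolding inj_on_def using assms pick_mono
    by (metis lessThan_iff linorder_neqE_nat order_less_irrefl)
  have sub: "pick S ` {..<k} \<subseteq> S" using assms pick_in_set by auto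
  have "card (pick S ` {..<k}) = card S" using card_image[OF inj] assms by simp
  then have "pick S ` {..<k} = S" using card_subset_eq[OF assms(1) sub] by simp
  then show ?thesis using inj unfolding bij_betw_def by simp
qed

lemma cullis_sgn_alt:
  assumes "finite c" "card c = k"
  shows "cullis_sgn c k = ((-1::'a::comm_ring_1) ^ (\<Sum>c + (\<Sum>a<k. a)))"
proof -
  have ge: "\<And>a. a < k \<Longrightarrow> a \<le> pick c a" using pick_ge assms by simp
  have "(\<Sum>a<k. pick c a - a) + (\<Sum>a<k. a) = (\<Sum>a<k. pick c a)"
    unfolding sum.distrib[symmetric] by (rule sum.cong) (auto simp: ge)
  also have "\<dots> = \<Sum>c" using sum.reindex_bij_betw[OF pick_bij[OF assms], of id] by simp
  finally have e: "(\<Sum>a<k. pick c a - a) + (\<Sum>a<k. a) = \<Sum>c" .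
  have "((-1::'a) ^ (\<Sum>c + (\<Sum>a<k. a))) = (-1)^(\<Sum>a<k. pick c a - a) * ((-1)^(\<Sum>a<k. a))^2"
    unfolding e[symmetric] by (simp add: power_add power2_eq_square mult.assoc)
  also have "\<dots> = (-1)^(\<Sum>a<k. pick c a - a)"
    by (simp add: power_even_eq[symmetric] power_mult[symmetric] flip: power_mult_distrib)
  finally show ?thesis unfolding cullis_sgn_def by simp
qed

lemma pick_lessThan: assumes "j < k" shows "pick {..<k} j = j"
proof (rule pick_eqI)
  have "{a \<in> {..<k}. a < j} = {..<j}" using assms by auto
  then show "card {a \<in> {..<k}. a < j} = j" by simp
qed (use assms in auto)

lemma submatrix_form:
  assumes "c \<subseteq> {..<dim_row X}" "card c = k" "dim_col X = k"
  shows "submatrix X c {..<k} = mat k k (\<lambda>(i,j). X $$ (pick c i, j))"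
proof -
  have r: "{i. i < dim_row X \<and> i \<in> c} = c" using assms by auto
  have cc: "{j. j < dim_col X \<and> j \<in> {..<k}} = {..<k}" using assms by auto
  show ?thesis unfolding submatrix_def r cc using assms(2)
    by (intro eq_matI) (auto simp: pick_lessThan)
qed

definition shiftT :: "nat \<Rightarrow> nat \<Rightarrow> 'a::comm_ring_1 mat \<Rightarrow> 'a mat" where
  "shiftT n k X = mat n k (\<lambda>(i,j). if i < n - 1 then X $$ (Suc i, j) else (-1)^(n+k+1) * X $$ (0, j))"

definition rho :: "nat \<Rightarrow> nat \<Rightarrow> nat" where
  "rho n x = (if x = 0 then n - 1 else x - 1)"

lemma rho_lt: "x < n \<Longrightarrow> rho n x < n" by (auto simp: rho_def)

lemma inj_rho: "inj_on (rho n) {..<n}"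
  unfolding inj_on_def rho_def by auto

lemma shiftT_rho:
  assumes "X \<in> carrier_mat n k" "x < n" "j < k"
  shows "shiftT n k X $$ (rho n x, j) = (if x = 0 then (-1)^(n+k+1) else 1) * X $$ (x, j)"
  using assms rho_lt[OF assms(2)] by (auto simp: shiftT_def rho_def)

lemma image_filter_eq: "{x \<in> f ` c. P x} = f ` {b\<in>c. P (f b)}" by blast

lemma pick_rho_notin:
  assumes "c \<subseteq> {..<n}" "0 \<notin> c" "card c = k" "a < k"
  shows "pick (rho n ` c) a = rho n (pick c a)"
proof (rule pick_eqI)
  have fin: "finite c" using finite_subset[OF assms(1)] by simp
  have ak: "a < card c \<or> infinite c" using assms by simp
  have pc: "pick c a \<in> c" using pick_in_set[OF ak] .
  then show "rho n (pick c a) \<in> rho n ` c" by (rule imageI)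
  have pc0: "pick c a \<noteq> 0" using pc assms(2) by metis
  have "{b\<in>c. rho n b < rho n (pick c a)} = {b\<in>c. b < pick c a}"
  proof (rule Collect_cong)
    fix b show "(b \<in> c \<and> rho n b < rho n (pick c a)) = (b \<in> c \<and> b < pick c a)"
    proof (cases "b \<in> c")
      case True
      then have b0: "b \<noteq> 0" using assms(2) by metis
      have r1: "rho n b = b - 1" using b0 by (simp add: rho_def)
      have r2: "rho n (pick c a) = pick c a - 1" using pc0 by (simp add: rho_def)
      show ?thesis unfolding r1 r2 using b0 pc0 True by linarith
    qed simp
  qed
  then have e: "{x \<in> rho n ` c. x < rho n (pick c a)} = rho n ` {b\<in>c. b < pick c a}"
    by (simp only: image_filter_eq)
  have "inj_on (rho n) {b\<in>c. b < pick c a}"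
    by (rule inj_on_subset[OF inj_rho]) (use assms(1) in auto)
  then have "card {x \<in> rho n ` c. x < rho n (pick c a)} = card {b\<in>c. b < pick c a}"
    unfolding e by (rule card_image)
  also have "\<dots> = a" using card_pick[OF ak] .
  finally show "card {x \<in> rho n ` c. x < rho n (pick c a)} = a" .
qed

lemma pick_rho_in:
  assumes "c \<subseteq> {..<n}" "0 \<in> c" "card c = k" "a < k"
  shows "pick (rho n ` c) a = rho n (pick c (cyc k a))"
proof (rule pick_eqI)
  have fin: "finite c" using finite_subset[OF assms(1)] by simp
  have injc: "inj_on (rho n) c" by (rule inj_on_subset[OF inj_rho assms(1)])
  have ck: "cyc k a < k" using assms(4) by (simp add: cyc_def)
  have ck': "cyc k a < card c \<or> infinite c" using ck assms(3) by simp
  have pc: "pick c (cyc k a) \<in> c" using pick_in_set[OF ck'] .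
  then show "rho n (pick c (cyc k a)) \<in> rho n ` c" by (rule imageI)
  have p0: "pick c 0 = 0" using assms(2) by simp
  show "card {x \<in> rho n ` c. x < rho n (pick c (cyc k a))} = a"
  proof (cases "a = k - 1")
    case True
    then have "cyc k a = 0" using assms(4) by (simp add: cyc_def)
    then have y: "rho n (pick c (cyc k a)) = n - 1" using p0 by (simp add: rho_def)
    have "{b\<in>c. rho n b < n - 1} = c - {0}"
    proof (rule Set.set_eqI)
      fix b show "(b \<in> {b \<in> c. rho n b < n - 1}) = (b \<in> c - {0})"
      proof (cases "b \<in> c")
        case True
        then have "b < n" using assms(1) by (metis lessThan_iff subsetD)
        then show ?thesis using True by (auto simp: rho_def)
      qed simp
    qed
    then have "{x \<in> rho n ` c. x < n - 1} = rho n ` (c - {0})"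
      by (simp only: image_filter_eq)
    moreover have "card (rho n ` (c - {0})) = k - 1"
      using card_image[OF inj_on_subset[OF injc, of "c - {0}"]] assms(2,3) fin by simp
    ultimately show ?thesis using y True by simp
  next
    case False
    then have cy: "cyc k a = Suc a" using assms(4) by (simp add: cyc_def)
    have sa: "Suc a < card c \<or> infinite c" using False assms(3,4) by auto
    have gt: "pick c (Suc a) > 0"
      using pick_mono[OF sa, of 0] p0 by simp
    have y: "rho n (pick c (cyc k a)) = pick c (Suc a) - 1" using cy gt by (simp add: rho_def)
    have ltn: "pick c (Suc a) < n" using pc cy assms(1) by (metis lessThan_iff subsetD)
    have "{b\<in>c. rho n b < pick c (Suc a) - 1} = {b\<in>c. b < pick c (Suc a)} - {0}"
    proof (rule Set.set_eqI)
      fix b show "(b \<in> {b\<in>c. rho n b < pick c (Suc a) - 1}) = (b \<in> {b\<in>c. b < pick c (Suc a)} - {0})"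
      proof (cases "b = 0")
        case True
        then show ?thesis using gt ltn by (simp add: rho_def del: pick.simps) linarith
      next
        case False
        then show ?thesis using gt by (simp add: rho_def del: pick.simps) linarith
      qed
    qed
    then have "{x \<in> rho n ` c. x < pick c (Suc a) - 1} = rho n ` ({b\<in>c. b < pick c (Suc a)} - {0})"
      by (simp only: image_filter_eq)
    moreover have "card (rho n ` ({b\<in>c. b < pick c (Suc a)} - {0})) = card ({b\<in>c. b < pick c (Suc a)} - {0})"
      by (rule card_image, rule inj_on_subset[OF injc]) blast
    moreover have "0 \<in> {b\<in>c. b < pick c (Suc a)}" using gt assms(2) by simp
    then have "card ({b\<in>c. b < pick c (Suc a)} - {0}) = a"
      using card_pick[OF sa] by (simp add: card_Diff_singleton)
    ultimately show ?thesis using y by simp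
  qed
qed

lemma rho_image_props:
  assumes "c \<subseteq> {..<n}" "card c = k"
  shows "rho n ` c \<subseteq> {..<n}" "card (rho n ` c) = k"
proof -
  show "rho n ` c \<subseteq> {..<n}" using assms(1) rho_lt by (metis image_subsetI lessThan_iff subsetD)
  show "card (rho n ` c) = k" using card_image[OF inj_on_subset[OF inj_rho assms(1)]] assms(2) by simp
qed

lemma shiftT_carrier: "shiftT n k X \<in> carrier_mat n k" by (simp add: shiftT_def)

lemma sub_notin:
  assumes X: "X \<in> carrier_mat n k" and c: "c \<subseteq> {..<n}" "0 \<notin> c" "card c = k"
  shows "submatrix (shiftT n k X) (rho n ` c) {..<k} = submatrix X c {..<k}"
proof -
  note ri = rho_image_props[OF c(1) c(3)]
  have e1: "submatrix (shiftT n k X) (rho n ` c) {..<k} = mat k k (\<lambda>(i,j). shiftT n k X $$ (pick (rho n ` c) i, j))"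
    by (rule submatrix_form) (use ri in \<open>auto simp: shiftT_def\<close>)
  have e2: "submatrix X c {..<k} = mat k k (\<lambda>(i,j). X $$ (pick c i, j))"
    by (rule submatrix_form) (use c X in auto)
  show ?thesis unfolding e1 e2
  proof (rule eq_matI)
    fix i j assume ij: "i < dim_row (mat k k (\<lambda>(i,j). X $$ (pick c i, j)))" "j < dim_col (mat k k (\<lambda>(i,j). X $$ (pick c i, j)))"
    then have i: "i < k" and j: "j < k" by auto
    have ik: "i < card c \<or> infinite c" using i c(3) by simp
    have pc: "pick c i \<in> c" by (rule pick_in_set[OF ik])
    have pn: "pick c i < n" using pc c(1) by (metis lessThan_iff subsetD)
    have p0: "pick c i \<noteq> 0" using pc c(2) by metis
    show "mat k k (\<lambda>(i,j). shiftT n k X $$ (pick (rho n ` c) i, j)) $$ (i, j) = mat k k (\<lambda>(i,j). X $$ (pick c i, j)) $$ (i, j)"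
      using i j pick_rho_notin[OF c(1) c(2) c(3) i] shiftT_rho[OF X pn j] p0 by simp
  qed auto
qed

lemma sub_in:
  assumes X: "X \<in> carrier_mat n k" and c: "c \<subseteq> {..<n}" "0 \<in> c" "card c = k" and k: "1 \<le> k"
  shows "det (submatrix (shiftT n k X) (rho n ` c) {..<k}) = signof (cyc k) * ((-1)^(n+k+1) * det (submatrix X c {..<k}))"
proof -
  note ri = rho_image_props[OF c(1) c(3)]
  define s :: 'a where "s = (-1)^(n+k+1)"
  define A where "A = submatrix X c {..<k}"
  have e2: "A = mat k k (\<lambda>(i,j). X $$ (pick c i, j))" unfolding A_def
    by (rule submatrix_form) (use c X in auto)
  have Ac: "A \<in> carrier_mat k k" unfolding e2 by simp
  define B where "B = multrow 0 s A"
  have Bc: "B \<in> carrier_mat k k" using Ac unfolding B_def mat_multrow_def by simp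
  have e1: "submatrix (shiftT n k X) (rho n ` c) {..<k} = mat k k (\<lambda>(i,j). shiftT n k X $$ (pick (rho n ` c) i, j))"
    by (rule submatrix_form) (use ri in \<open>auto simp: shiftT_def\<close>)
  have p0: "pick c 0 = 0" using c(2) by simp
  have e3: "submatrix (shiftT n k X) (rho n ` c) {..<k} = mat k k (\<lambda>(i,j). B $$ (cyc k i, j))"
    unfolding e1
  proof (rule eq_matI)
    fix i j assume ij: "i < dim_row (mat k k (\<lambda>(i,j). B $$ (cyc k i, j)))" "j < dim_col (mat k k (\<lambda>(i,j). B $$ (cyc k i, j)))"
    then have i: "i < k" and j: "j < k" by auto
    define b where "b = cyc k i"
    have bk: "b < k" using i by (simp add: b_def cyc_def)
    have ik: "b < card c \<or> infinite c" using bk c(3) by simp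
    have pc: "pick c b \<in> c" by (rule pick_in_set[OF ik])
    have pn: "pick c b < n" using pc c(1) by (metis lessThan_iff subsetD)
    have pz: "(pick c b = 0) = (b = 0)"
    proof
      assume "pick c b = 0"
      then show "b = 0" using pick_mono[OF ik, of 0] p0 by (cases b) auto
    qed (use p0 in simp)
    have "shiftT n k X $$ (pick (rho n ` c) i, j) = (if b = 0 then s else 1) * X $$ (pick c b, j)"
      using pick_rho_in[OF c(1) c(2) c(3) i] shiftT_rho[OF X pn j] pz unfolding b_def s_def by simp
    also have "\<dots> = B $$ (b, j)" unfolding B_def mat_multrow_def e2 using bk j by simp
    finally show "mat k k (\<lambda>(i,j). shiftT n k X $$ (pick (rho n ` c) i, j)) $$ (i, j) = mat k k (\<lambda>(i,j). B $$ (cyc k i, j)) $$ (i, j)"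
      using i j unfolding b_def by simp
  qed auto
  have "det (mat k k (\<lambda>(i,j). B $$ (cyc k i, j))) = signof (cyc k) * det B"
    by (rule det_permute_rows[OF Bc]) (use cyc_props[OF k] in simp)
  also have "det B = s * det A" unfolding B_def by (rule det_multrow[OF _ Ac]) (use k in simp)
  finally show ?thesis unfolding e3 s_def A_def .
qed

lemma sum_rho_notin:
  assumes "finite c" "0 \<notin> c"
  shows "(\<Sum>x\<in>c. rho n x) + card c = \<Sum>c"
proof -
  have "(\<Sum>x\<in>c. rho n x) + card c = (\<Sum>x\<in>c. rho n x + 1)" unfolding sum.distrib by simp
  also have "\<dots> = (\<Sum>x\<in>c. x)"
  proof (rule sum.cong)
    fix x assume "x \<in> c" then have "x \<noteq> 0" using assms(2) by metis
    then show "rho n x + 1 = x" by (simp add: rho_def)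
  qed simp
  finally show ?thesis by simp
qed

lemma par1: "(a::nat) + k = b \<Longrightarrow> odd k \<Longrightarrow> even (a + K) = odd (b + K)" by presburger
lemma par2: "(a::nat) + k = b + n \<Longrightarrow> even (a + K + (n + k + 1)) = odd (b + K)" by presburger

lemma cullis_shift:
  fixes X :: "'a::comm_ring_1 mat"
  assumes X: "X \<in> carrier_mat n k" and k: "odd k" and kn: "k \<le> n"
  shows "cullis_det n k (shiftT n k X) = - cullis_det n k X"
proof -
  have k1: "1 \<le> k" using k by (cases k) auto
  have n1: "1 \<le> n" using k1 kn by simp
  define CC where "CC = {c. c \<subseteq> {..<n} \<and> card c = k}"
  have finCC: "finite CC" unfolding CC_def
    by (rule finite_subset[of _ "Pow {..<n}"]) auto
  have inj: "inj_on ((`) (rho n)) CC"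
    by (rule inj_on_image, rule inj_on_subset[OF inj_rho]) (auto simp: CC_def)
  have sub: "(`) (rho n) ` CC \<subseteq> CC"
    using rho_image_props unfolding CC_def by blast
  have img: "(`) (rho n) ` CC = CC"
    using card_subset_eq[OF finCC sub] card_image[OF inj] by simp
  define f where "f = (\<lambda>c. cullis_sgn c k * det (submatrix (shiftT n k X) c {..<k}) :: 'a)"
  define g where "g = (\<lambda>c. cullis_sgn c k * det (submatrix X c {..<k}) :: 'a)"
  have "cullis_det n k (shiftT n k X) = sum f CC" unfolding cullis_det_def f_def CC_def by simp
  also have "\<dots> = sum f ((`) (rho n) ` CC)" unfolding img ..
  also have "\<dots> = sum (f \<circ> (`) (rho n)) CC" by (rule sum.reindex[OF inj])
  also have "\<dots> = sum (\<lambda>c. - g c) CC"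
  proof (rule sum.cong[OF refl])
    fix c assume "c \<in> CC"
    then have c: "c \<subseteq> {..<n}" "card c = k" unfolding CC_def by auto
    have fin: "finite c" using finite_subset[OF c(1)] by simp
    note ri = rho_image_props[OF c]
    have finr: "finite (rho n ` c)" using fin by simp
    have injc: "inj_on (rho n) c" by (rule inj_on_subset[OF inj_rho c(1)])
    have sr: "\<Sum>(rho n ` c) = (\<Sum>x\<in>c. rho n x)" using sum.reindex[OF injc, of id] by simp
    define K where "K = (\<Sum>a<k. a)"
    have sg1: "cullis_sgn (rho n ` c) k = ((-1::'a) ^ (\<Sum>(rho n ` c) + K))"
      unfolding K_def by (rule cullis_sgn_alt[OF finr ri(2)])
    have sg2: "cullis_sgn c k = ((-1::'a) ^ (\<Sum>c + K))"
      unfolding K_def by (rule cullis_sgn_alt[OF fin c(2)])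
    show "(f \<circ> (`) (rho n)) c = - g c"
    proof (cases "0 \<in> c")
      case False
      have e: "\<Sum>(rho n ` c) + k = \<Sum>c" using sum_rho_notin[OF fin False] sr c(2) by simp
      have par: "even (\<Sum>(rho n ` c) + K) = odd (\<Sum>c + K)" using par1[OF e k] .
      have "(-1::'a) ^ (\<Sum>(rho n ` c) + K) = - ((-1) ^ (\<Sum>c + K))"
        unfolding minus_one_power_iff par by simp
      then show ?thesis unfolding f_def g_def o_def sg1 sg2 sub_notin[OF X c(1) False c(2)] by simp
    next
      case True
      have fin0: "finite (c - {0})" using fin by simp
      have c0: "card (c - {0}) = k - 1" using True c(2) fin by simp
      have a1: "(\<Sum>x\<in>c. rho n x) = rho n 0 + (\<Sum>x\<in>c - {0}. rho n x)"
        using sum.remove[OF fin True] by simp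
      have a2: "\<Sum>c = 0 + (\<Sum>x\<in>c - {0}. x)"
        using sum.remove[OF fin True, of id] by simp
      have a3: "(\<Sum>x\<in>c - {0}. rho n x) + (k - 1) = (\<Sum>x\<in>c - {0}. x)"
        using sum_rho_notin[OF fin0, of n] c0 by simp
      have e: "\<Sum>(rho n ` c) + k = \<Sum>c + n"
        using a1 a2 a3 sr k1 n1 by (simp add: rho_def)
      have sc: "(signof (cyc k) :: 'a) = 1"
        using cyc_props[OF k1] k by simp
      have par: "even (\<Sum>(rho n ` c) + K + (n + k + 1)) = odd (\<Sum>c + K)" using par2[OF e] .
      have "(-1::'a) ^ (\<Sum>(rho n ` c) + K) * (-1) ^ (n + k + 1) = (-1) ^ (\<Sum>(rho n ` c) + K + (n + k + 1))"
        by (simp only: power_add)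
      also have "\<dots> = - ((-1) ^ (\<Sum>c + K))"
        unfolding minus_one_power_iff par by simp
      finally have pw: "(-1::'a) ^ (\<Sum>(rho n ` c) + K) * (-1) ^ (n + k + 1) = - ((-1) ^ (\<Sum>c + K))" .
      then show ?thesis unfolding f_def g_def o_def sg1 sg2 sub_in[OF X c(1) True c(2) k1] sc
        using pw by (simp add: mult.assoc[symmetric])
    qed
  qed
  also have "\<dots> = - cullis_det n k X" unfolding cullis_det_def g_def CC_def by (simp add: sum_negf)
  finally show ?thesis .
qed

definition shiftv :: "nat \<Rightarrow> nat \<Rightarrow> 'a::comm_ring_1 vec \<Rightarrow> 'a vec" where
  "shiftv n k z = vec n (\<lambda>i. if i < n - 1 then z $ Suc i else (-1)^(n+k+1) * z $ 0)"

definition shiftU :: "nat \<Rightarrow> nat \<Rightarrow> 'a::comm_ring_1 mat \<Rightarrow> 'a mat" where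
  "shiftU n k Y = mat n k (\<lambda>(i,j). if i = 0 then (-1)^(n+k+1) * Y $$ (n - 1, j) else Y $$ (i - 1, j))"

lemma neg1_sq: "((-1::'a::comm_ring_1)^m) * ((-1)^m) = 1"
  by (simp add: power_mult_distrib[symmetric])

lemma shiftT_add:
  assumes "X \<in> carrier_mat n k" "Y \<in> carrier_mat n k"
  shows "shiftT n k (X + Y) = shiftT n k X + shiftT n k Y"
  by (rule eq_matI) (use assms in \<open>auto simp: shiftT_def algebra_simps\<close>)

lemma shiftT_smult:
  assumes "X \<in> carrier_mat n k"
  shows "shiftT n k (a \<cdot>\<^sub>m X) = a \<cdot>\<^sub>m shiftT n k X"
  by (rule eq_matI) (use assms in \<open>auto simp: shiftT_def algebra_simps\<close>)

lemma shiftU_carrier: "shiftU n k X \<in> carrier_mat n k" by (simp add: shiftU_def)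

lemma shiftTU: assumes "Y \<in> carrier_mat n k" shows "shiftT n k (shiftU n k Y) = Y"
proof (rule eq_matI)
  fix i j assume "i < dim_row Y" "j < dim_col Y"
  then show "shiftT n k (shiftU n k Y) $$ (i, j) = Y $$ (i, j)"
    using assms neg1_sq[of "n+k+1", where 'a='a]
    by (cases "i = n - 1") (auto simp: shiftT_def shiftU_def mult.assoc[symmetric])
qed (use assms in \<open>auto simp: shiftT_def\<close>)

lemma shiftUT: assumes "X \<in> carrier_mat n k" shows "shiftU n k (shiftT n k X) = X"
proof (rule eq_matI)
  fix i j assume "i < dim_row X" "j < dim_col X"
  then show "shiftU n k (shiftT n k X) $$ (i, j) = X $$ (i, j)"
    using assms neg1_sq[of "n+k+1", where 'a='a]
    by (auto simp: shiftT_def shiftU_def mult.assoc[symmetric])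
qed (use assms in \<open>auto simp: shiftU_def\<close>)

lemma shiftT_bij: "bij_betw (shiftT n k) (carrier_mat n k) (carrier_mat n k)"
  by (rule bij_betw_byWitness[of _ "shiftU n k"])
     (auto simp: shiftTU shiftUT shiftT_carrier shiftU_carrier)

lemma tmv_sum:
  assumes "A \<in> carrier_mat n k" "v \<in> carrier_vec n" "j < k"
  shows "(transpose_mat A *\<^sub>v v) $ j = (\<Sum>i<n. A $$ (i, j) * v $ i)"
  using assms by (simp add: mult_mat_vec_def scalar_prod_def atLeast0LessThan)

lemma shift_S1:
  assumes X: "X \<in> carrier_mat n k" and z: "z \<in> carrier_vec n" and n1: "1 \<le> n"
  shows "transpose_mat (shiftT n k X) *\<^sub>v shiftv n k z = transpose_mat X *\<^sub>v z"
proof (rule eq_vecI)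
  obtain m where nm: "n = Suc m" using n1 by (cases n) auto
  fix j assume "j < dim_vec (transpose_mat X *\<^sub>v z)"
  then have j: "j < k" using X by simp
  have sv: "shiftv n k z \<in> carrier_vec n" by (simp add: shiftv_def)
  have "(transpose_mat (shiftT n k X) *\<^sub>v shiftv n k z) $ j
      = (\<Sum>i<n. shiftT n k X $$ (i, j) * shiftv n k z $ i)"
    by (rule tmv_sum[OF shiftT_carrier sv j])
  also have "\<dots> = (\<Sum>i<m. shiftT n k X $$ (i, j) * shiftv n k z $ i) + shiftT n k X $$ (m, j) * shiftv n k z $ m"
    unfolding nm by simp
  also have "(\<Sum>i<m. shiftT n k X $$ (i, j) * shiftv n k z $ i) = (\<Sum>i<m. X $$ (Suc i, j) * z $ Suc i)"
    by (rule sum.cong) (use j nm in \<open>auto simp: shiftT_def shiftv_def\<close>)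
  also have "shiftT n k X $$ (m, j) * shiftv n k z $ m = ((-1)^(n+k+1) * (-1)^(n+k+1)) * (X $$ (0, j) * z $ 0)"
    using j nm by (simp add: shiftT_def shiftv_def algebra_simps)
  also have "\<dots> = X $$ (0, j) * z $ 0" by (simp only: neg1_sq mult_1)
  also have "(\<Sum>i<m. X $$ (Suc i, j) * z $ Suc i) + X $$ (0, j) * z $ 0 = (\<Sum>i<n. X $$ (i, j) * z $ i)"
    unfolding nm sum.lessThan_Suc_shift by simp
  also have "\<dots> = (transpose_mat X *\<^sub>v z) $ j" by (rule tmv_sum[OF X z j, symmetric])
  finally show "(transpose_mat (shiftT n k X) *\<^sub>v shiftv n k z) $ j = (transpose_mat X *\<^sub>v z) $ j" .
qed (use X in \<open>simp add: shiftT_def\<close>)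

lemma shift_S3:
  assumes X: "X \<in> carrier_mat n k" and n1: "1 \<le> n" and k: "odd k" and j: "j < k"
  shows "(\<Sum>i<n. (-1) ^ (Suc i) * shiftT n k X $$ (i, j)) = - (\<Sum>i<n. (-1) ^ (Suc i) * X $$ (i, j))"
proof -
  obtain m where nm: "n = Suc m" using n1 by (cases n) auto
  have "(\<Sum>i<n. (-1) ^ (Suc i) * shiftT n k X $$ (i, j))
     = (\<Sum>i<m. (-1) ^ (Suc i) * shiftT n k X $$ (i, j)) + (-1)^(Suc m) * shiftT n k X $$ (m, j)"
    unfolding nm by simp
  also have "(\<Sum>i<m. (-1) ^ (Suc i) * shiftT n k X $$ (i, j)) = (\<Sum>i<m. - ((-1) ^ (Suc (Suc i)) * X $$ (Suc i, j)))"
    by (rule sum.cong) (use j nm in \<open>auto simp: shiftT_def\<close>)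
  also have "(-1)^(Suc m) * shiftT n k X $$ (m, j) = ((-1)^(Suc m) * (-1)^(Suc m + k + 1)) * X $$ (0, j)"
    using j nm by (simp add: shiftT_def algebra_simps)
  also have "(-1::'a)^(Suc m + k + 1) = (-1)^(Suc m)"
    using k by (simp add: minus_one_power_iff)
  also have "((-1::'a)^(Suc m) * (-1)^(Suc m)) = 1" by (rule neg1_sq)
  also have "(\<Sum>i<m. - ((-1) ^ (Suc (Suc i)) * X $$ (Suc i, j))) + 1 * X $$ (0, j)
      = - ((-1) ^ (Suc 0) * X $$ (0, j) + (\<Sum>i<m. (-1) ^ (Suc (Suc i)) * X $$ (Suc i, j)))"
    by (simp add: sum_negf)
  also have "(-1) ^ (Suc 0) * X $$ (0, j) + (\<Sum>i<m. (-1) ^ (Suc (Suc i)) * X $$ (Suc i, j))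
      = (\<Sum>i<n. (-1) ^ (Suc i) * X $$ (i, j))"
    unfolding nm sum.lessThan_Suc_shift by simp
  finally show ?thesis .
qed

lemma shiftv_pow:
  assumes z: "z \<in> carrier_vec n" and m: "m < n"
  shows "(shiftv n k ^^ m) z = zcirc n k (Suc m) z"
  using m
proof (induction m)
  case 0
  show ?case by (rule eq_vecI) (use z in \<open>auto simp: zcirc_def\<close>)
next
  case (Suc m)
  then have IH: "(shiftv n k ^^ m) z = zcirc n k (Suc m) z" by simp
  show ?case unfolding funpow.simps o_def IH
  proof (rule eq_vecI)
    fix j assume "j < dim_vec (zcirc n k (Suc (Suc m)) z)"
    then have j: "j < n" by (simp add: zcirc_def)
    show "shiftv n k (zcirc n k (Suc m) z) $ j = zcirc n k (Suc (Suc m)) z $ j"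
      using j Suc.prems by (cases "j = n - 1") (auto simp: shiftv_def zcirc_def)
  qed (simp add: shiftv_def zcirc_def)
qed

lemma it_carrier: "X \<in> carrier_mat n k \<Longrightarrow> (shiftT n k ^^ m) X \<in> carrier_mat n k"
  by (cases m) (auto simp: shiftT_carrier)

lemma itv_carrier: "z \<in> carrier_vec n \<Longrightarrow> (shiftv n k ^^ m) z \<in> carrier_vec n"
  by (cases m) (auto simp: shiftv_def)

lemma it_add:
  assumes "X \<in> carrier_mat n k" "Y \<in> carrier_mat n k"
  shows "(shiftT n k ^^ m) (X + Y) = (shiftT n k ^^ m) X + (shiftT n k ^^ m) Y"
proof (induction m)
  case (Suc m)
  then show ?case using shiftT_add[OF it_carrier[OF assms(1)] it_carrier[OF assms(2)]] by simp
qed simp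

lemma it_smult:
  assumes "X \<in> carrier_mat n k"
  shows "(shiftT n k ^^ m) (a \<cdot>\<^sub>m X) = a \<cdot>\<^sub>m (shiftT n k ^^ m) X"
proof (induction m)
  case (Suc m)
  then show ?case using shiftT_smult[OF it_carrier[OF assms(1)]] by simp
qed simp

lemma it_S1:
  assumes X: "X \<in> carrier_mat n k" and z: "z \<in> carrier_vec n" and n1: "1 \<le> n"
  shows "transpose_mat ((shiftT n k ^^ m) X) *\<^sub>v (shiftv n k ^^ m) z = transpose_mat X *\<^sub>v z"
proof (induction m)
  case (Suc m)
  then show ?case using shift_S1[OF it_carrier[OF X] itv_carrier[OF z] n1] by simp
qed simp

lemma it_cullis:
  fixes X :: "'a::comm_ring_1 mat"
  assumes X: "X \<in> carrier_mat n k" and k: "odd k" and kn: "k \<le> n"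
  shows "cullis_det n k ((shiftT n k ^^ m) X) = (-1)^m * cullis_det n k X"
proof (induction m)
  case (Suc m)
  then show ?case using cullis_shift[OF it_carrier[OF X] k kn, of m] by simp
qed simp

lemma it_alt:
  fixes X :: "'a::comm_ring_1 mat"
  assumes X: "X \<in> carrier_mat n k" and n1: "1 \<le> n" and k: "odd k" and j: "j < k"
  shows "(\<Sum>i<n. (-1) ^ (Suc i) * (shiftT n k ^^ m) X $$ (i, j)) = (-1)^m * (\<Sum>i<n. (-1) ^ (Suc i) * X $$ (i, j))"
proof (induction m)
  case (Suc m)
  then show ?case using shift_S3[OF it_carrier[OF X] n1 k j, of m] by simp
qed simp

theorem mainTheorem18:
  fixes n k i0 :: nat
  assumes "odd k" and "1 \<le> k" and "k \<le> n" and "1 \<le> i0" and "i0 \<le> n"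
  shows "\<exists>S :: 'a::field mat \<Rightarrow> 'a mat.
     (\<forall>X \<in> carrier_mat n k. S X \<in> carrier_mat n k)
   \<and> (\<forall>X \<in> carrier_mat n k. \<forall>Y \<in> carrier_mat n k. S (X + Y) = S X + S Y)
   \<and> (\<forall>X \<in> carrier_mat n k. \<forall>a. S (a \<cdot>\<^sub>m X) = a \<cdot>\<^sub>m S X)
   \<and> bij_betw S (carrier_mat n k) (carrier_mat n k)
   \<and> (\<forall>X \<in> carrier_mat n k. \<forall>z \<in> carrier_vec n.
        transpose_mat X *\<^sub>v z = 0\<^sub>v k \<longrightarrow> transpose_mat (S X) *\<^sub>v zcirc n k i0 z = 0\<^sub>v k)
   \<and> (\<forall>X \<in> carrier_mat n k. cullis_det n k X = 0 \<longrightarrow> cullis_det n k (S X) = 0)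
   \<and> (\<forall>X \<in> carrier_mat n k.
        (\<forall>j<k. (\<Sum>i<n. (-1) ^ (Suc i) * S X $$ (i, j)) = 0) \<longrightarrow>
        (\<forall>j<k. (\<Sum>i<n. (-1) ^ (Suc i) * X $$ (i, j)) = 0))"
proof (intro exI[of _ "shiftT n k ^^ (i0 - 1)"] conjI ballI allI impI)
  have n1: "1 \<le> n" using assms by simp
  let ?S = "shiftT n k ^^ (i0 - 1) :: 'a mat \<Rightarrow> 'a mat"
  show "?S X \<in> carrier_mat n k" if "X \<in> carrier_mat n k" for X by (rule it_carrier[OF that])
  show "?S (X + Y) = ?S X + ?S Y" if "X \<in> carrier_mat n k" "Y \<in> carrier_mat n k" for X Y
    by (rule it_add[OF that])
  show "?S (a \<cdot>\<^sub>m X) = a \<cdot>\<^sub>m ?S X" if "X \<in> carrier_mat n k" for X a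
    by (rule it_smult[OF that])
  show "bij_betw ?S (carrier_mat n k) (carrier_mat n k)"
    by (rule bij_betw_funpow[OF shiftT_bij])
  show "transpose_mat (?S X) *\<^sub>v zcirc n k i0 z = 0\<^sub>v k"
    if "X \<in> carrier_mat n k" "z \<in> carrier_vec n" "transpose_mat X *\<^sub>v z = 0\<^sub>v k" for X z
  proof -
    have "zcirc n k i0 z = (shiftv n k ^^ (i0 - 1)) z"
      using shiftv_pow[OF that(2), of "i0 - 1" k] assms by simp
    then show ?thesis using it_S1[OF that(1,2) n1, of "i0 - 1"] that(3) by simp
  qed
  show "cullis_det n k (?S X) = 0" if "X \<in> carrier_mat n k" "cullis_det n k X = 0" for X
    using it_cullis[OF that(1) assms(1,3), of "i0 - 1"] that(2) by simp
  show "(\<Sum>i<n. (-1) ^ (Suc i) * X $$ (i, j)) = 0"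
    if "X \<in> carrier_mat n k" "\<forall>j<k. (\<Sum>i<n. (-1) ^ (Suc i) * ?S X $$ (i, j)) = 0" "j < k" for X j
  proof -
    have e: "(\<Sum>i<n. (-1) ^ (Suc i) * ?S X $$ (i, j)) = (-1)^(i0 - 1) * (\<Sum>i<n. (-1) ^ (Suc i) * X $$ (i, j))"
      by (rule it_alt[OF that(1) n1 assms(1) that(3)])
    have "(\<Sum>i<n. (-1) ^ (Suc i) * X $$ (i, j)) = ((-1)^(i0 - 1) * (-1)^(i0 - 1)) * (\<Sum>i<n. (-1) ^ (Suc i) * X $$ (i, j))"
      by (simp only: neg1_sq mult_1)
    also have "\<dots> = (-1)^(i0 - 1) * (\<Sum>i<n. (-1) ^ (Suc i) * ?S X $$ (i, j))"
      unfolding e by (simp only: mult.assoc)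
    also have "\<dots> = 0" using that(2,3) by simp
    finally show ?thesis .
  qed
qed

end
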